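(* Let $\mathcal G$ be a finite, connected, simple bipartite graph with $N_{\mathcal V}$ vertices and $N_{\mathcal E}$ edges, each edge identified with $[0,1]$, and let $\mathcal L$ be the self-adjoint operator on $L^2(\mathcal G)$ described in the context. For $\lambda\in\mathbb C$ let $E(\lambda)$ denote the eigenspace of $\mathcal L$ with eigenvalue $\lambda$. Then \[\dim E(n^2\pi^2)=N_{\mathcal E}-N_{\mathcal V}+2,\qquad n=1,2,\dots.\]
   Context: $L^2(\mathcal G)=\bigoplus_{e\in\mathcal E}L^2(e)$ with each $L^2(e)=L^2[0,1]$. The operator $\mathcal L$ acts by $-d^2/dx^2$ on each edge, with domain consisting of $f\in L^2(\mathcal G)$ that are continuous on $\mathcal G$, continuously differentiable on each edge with $f_e'$ absolutely continuous and $f''\in L^2(\mathcal G)$, and satisfying at every vertex $v$ the condition $\sum_{e\sim v}\partial_\nu f_e(v)=0$, where the sum is over edges incident on $v$ and $\partial_\nu$ is the derivative in the local coordinate identifying $e$ with $[0,1]$ and $v$ with $0$. *)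

theory Defs
  imports "HOL-Analysis.Analysis" "HOL-Library.Function_Algebras"
begin

text \<open>A graph is given by a vertex set V and a set E of edges, each edge written as an
ordered pair (a,b); the ordering only fixes the identification of the edge with [0,1]
(a corresponds to 0, b to 1). Simplicity: no loops and at most one edge between two
vertices (hence not both (a,b) and (b,a)).\<close>

definition simple_graph :: "'v set \<Rightarrow> ('v \<times> 'v) set \<Rightarrow> bool" where
  "simple_graph V E \<longleftrightarrow> finite V \<and> E \<subseteq> V \<times> V \<and>
     (\<forall>(a,b)\<in>E. a \<noteq> b \<and> (b,a) \<notin> E)"

definition graph_connected :: "'v set \<Rightarrow> ('v \<times> 'v) set \<Rightarrow> bool" where
  "graph_connected V E \<longleftrightarrow> (\<forall>u\<in>V. \<forall>w\<in>V. (u, w) \<in> (E \<union> E\<inverse>)\<^sup>*)"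

definition graph_bipartite :: "'v set \<Rightarrow> ('v \<times> 'v) set \<Rightarrow> bool" where
  "graph_bipartite V E \<longleftrightarrow> (\<exists>A \<subseteq> V. \<forall>(a,b)\<in>E. (a \<in> A \<longleftrightarrow> b \<notin> A))"

text \<open>An element of L^2(G) = direct sum over edges of L^2[0,1] is represented by
f :: edge => real => complex. Elements of the domain of the operator have a continuous
representative on each edge, which is unique; we normalise it to vanish outside [0,1]
and on non-edges, so representatives are in bijection with elements of the domain.\<close>

definition normalised_fun :: "('v \<times> 'v) set \<Rightarrow> ('v \<times> 'v \<Rightarrow> real \<Rightarrow> complex) \<Rightarrow> bool" where
  "normalised_fun E f \<longleftrightarrow> (\<forall>e. \<forall>x. (e \<notin> E \<or> x \<notin> {0..1}) \<longrightarrow> f e x = 0)"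

text \<open>H^2-regularity on an edge: u is C^1 on [0,1] with derivative u', u' is absolutely
continuous with derivative u'' (i.e. u' is the indefinite Lebesgue integral of u''), and
u'' is in L^2[0,1].\<close>

definition edge_H2 :: "(real \<Rightarrow> complex) \<Rightarrow> (real \<Rightarrow> complex) \<Rightarrow> (real \<Rightarrow> complex) \<Rightarrow> bool" where
  "edge_H2 u u' u'' \<longleftrightarrow>
     (\<forall>x\<in>{0..1}. (u has_vector_derivative u' x) (at x within {0..1})) \<and>
     continuous_on {0..1} u' \<and>
     u'' absolutely_integrable_on {0..1} \<and>
     (\<lambda>x. (norm (u'' x))\<^sup>2) integrable_on {0..1} \<and>
     (\<forall>x\<in>{0..1}. (u'' has_integral (u' x - u' 0)) {0..x})"

text \<open>Domain of the operator L: continuity at vertices and the Kirchhoff condition,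
where the outgoing derivative at the vertex a of edge (a,b) is u'(0), and at the vertex b
(local coordinate 1 - x) it is - u'(1).\<close>

definition in_dom_L ::
  "'v set \<Rightarrow> ('v \<times> 'v) set \<Rightarrow> ('v \<times> 'v \<Rightarrow> real \<Rightarrow> complex)
     \<Rightarrow> ('v \<times> 'v \<Rightarrow> real \<Rightarrow> complex) \<Rightarrow> ('v \<times> 'v \<Rightarrow> real \<Rightarrow> complex) \<Rightarrow> bool" where
  "in_dom_L V E f f' f'' \<longleftrightarrow>
     (\<forall>e\<in>E. edge_H2 (f e) (f' e) (f'' e)) \<and>
     (\<exists>\<phi> :: 'v \<Rightarrow> complex. \<forall>(a,b)\<in>E. f (a,b) 0 = \<phi> a \<and> f (a,b) 1 = \<phi> b) \<and>
     (\<forall>v\<in>V. (\<Sum>e\<in>{e\<in>E. fst e = v}. f' e 0) - (\<Sum>e\<in>{e\<in>E. snd e = v}. f' e 1) = 0)"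

definition eigenspace_L ::
  "'v set \<Rightarrow> ('v \<times> 'v) set \<Rightarrow> complex \<Rightarrow> ('v \<times> 'v \<Rightarrow> real \<Rightarrow> complex) set" where
  "eigenspace_L V E lam = {f. normalised_fun E f \<and>
     (\<exists>f' f''. in_dom_L V E f f' f'' \<and>
        (\<forall>e\<in>E. AE x in lborel. x \<in> {0..1} \<longrightarrow> - f'' e x = lam * f e x))}"

definition fscale :: "complex \<Rightarrow> ('e \<Rightarrow> real \<Rightarrow> complex) \<Rightarrow> ('e \<Rightarrow> real \<Rightarrow> complex)" where
  "fscale c f = (\<lambda>e x. c * f e x)"

end

theory Submission
  imports Defs
begin


definition vsc :: "complex \<Rightarrow> ('a \<Rightarrow> complex) \<Rightarrow> ('a \<Rightarrow> complex)" where
  "vsc c g = (\<lambda>x. c * g x)"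

lemma vs_vsc: "vector_space (vsc :: complex \<Rightarrow> ('a \<Rightarrow> complex) \<Rightarrow> _)"
  by unfold_locales (auto simp: vsc_def fun_eq_iff algebra_simps)

lemma vs_fscale: "vector_space (fscale :: complex \<Rightarrow> ('e \<Rightarrow> real \<Rightarrow> complex) \<Rightarrow> _)"
  by unfold_locales (auto simp: fscale_def fun_eq_iff algebra_simps)

lemma vs_mult: "vector_space ((*) :: complex \<Rightarrow> complex \<Rightarrow> complex)"
  by unfold_locales (auto simp: algebra_simps)

lemma sum_fun_app: "(\<Sum>x\<in>A. f x) y = (\<Sum>x\<in>A. f x y)"
  by (induct A rule: infinite_finite_induct) auto

context vector_space_pair begin

lemma dim_image_eq_gen:
  assumes lf: "Vector_Spaces.linear s1 s2 f"
    and fi: "inj_on f (vs1.span S)"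
  shows "vs2.dim (f ` S) = vs1.dim S"
proof -
  interpret lf: Vector_Spaces.linear s1 s2 f by fact
  obtain B where B: "B \<subseteq> S" "vs1.independent B" "S \<subseteq> vs1.span B" "card B = vs1.dim S"
    using vs1.basis_exists[of S] by auto
  then have "vs1.span S = vs1.span B"
    using vs1.span_mono[of B S] vs1.span_mono[of S "vs1.span B"] vs1.span_span[of B] by auto
  moreover have "card (f ` B) = card B"
    using assms card_image[of f B] inj_on_subset[of f "vs1.span S" B] B vs1.span_superset by auto
  moreover have "(f ` B) \<subseteq> (f ` S)"
    using B by auto
  ultimately show ?thesis
    by (metis B(2) B(4) fi lf.dependent_inj_imageD lf.span_image vs2.dim_eq_card_independent vs2.dim_span)
qed

lemma rank_nullity_sub:
  assumes lf: "Vector_Spaces.linear s1 s2 f" and U: "vs1.subspace U" and fin: "finite W" "U \<subseteq> vs1.span W"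
  shows "vs1.dim U = vs1.dim {x\<in>U. f x = 0} + vs2.dim (f ` U)"
proof -
  interpret lf: Vector_Spaces.linear s1 s2 f by fact
  let ?N = "{x\<in>U. f x = 0}"
  obtain K where K: "K \<subseteq> ?N" "vs1.independent K" "?N \<subseteq> vs1.span K"
    using vs1.maximal_independent_subset[of ?N] by blast
  obtain B where B: "K \<subseteq> B" "B \<subseteq> U" "vs1.independent B" "U \<subseteq> vs1.span B"
    using vs1.maximal_independent_subset_extend[of K U] K by blast
  have finB: "finite B" using vs1.independent_span_bound[OF fin(1) B(3)] B(2) fin(2) by blast
  have dU: "vs1.dim U = card B" using vs1.basis_card_eq_dim[OF B(2) B(4) B(3)] by simp
  have dN: "vs1.dim ?N = card K" using vs1.basis_card_eq_dim[OF K(1) K(3) K(2)] by simp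
  have finK: "finite K" using finB B(1) finite_subset by blast
  have fK0: "\<And>x. x \<in> K \<Longrightarrow> f x = 0" using K(1) by blast
  have disj: "x = 0" if "x \<in> vs1.span K" "x \<in> vs1.span (B - K)" for x
  proof -
    have "x \<in> range (\<lambda>u. \<Sum>v\<in>K. s1 (u v) v)" using that(1) vs1.span_finite[OF finK] by simp
    then obtain u where u: "x = (\<Sum>v\<in>K. s1 (u v) v)" by blast
    have "x \<in> range (\<lambda>u. \<Sum>v\<in>B-K. s1 (u v) v)" using that(2) vs1.span_finite[of "B-K"] finB by simp
    then obtain w where w: "x = (\<Sum>v\<in>B-K. s1 (w v) v)" by blast
    define c where "c v = (if v \<in> K then u v else - w v)" for v
    have "(\<Sum>v\<in>B. s1 (c v) v) = (\<Sum>v\<in>K. s1 (c v) v) + (\<Sum>v\<in>B-K. s1 (c v) v)"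
      using sum.subset_diff[OF B(1) finB] by (simp add: add.commute)
    also have "(\<Sum>v\<in>K. s1 (c v) v) = x" using u by (simp add: c_def)
    also have "(\<Sum>v\<in>B-K. s1 (c v) v) = - x" using w
      by (simp add: c_def vs1.scale_minus_left sum_negf)
    finally have "(\<Sum>v\<in>B. s1 (c v) v) = 0" by simp
    then have "\<forall>v\<in>B. c v = 0" using vs1.independentD[OF B(3) finB subset_refl] by blast
    then have "\<forall>v\<in>K. u v = 0"
    proof (intro ballI)
      fix v assume "\<forall>v\<in>B. c v = 0" "v \<in> K"
      then have "c v = 0" using B(1) by blast
      then show "u v = 0" using \<open>v \<in> K\<close> by (simp add: c_def)
    qed
    then show ?thesis using u by (simp add: vs1.scale_zero_left)
  qed
  have inj: "inj_on f (vs1.span (B - K))"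
  proof (subst lf.inj_on_iff_eq_0[OF vs1.subspace_span], intro ballI impI)
    fix x assume x: "x \<in> vs1.span (B-K)" "f x = 0"
    have "vs1.span (B - K) \<subseteq> U" using vs1.span_minimal[OF _ U] B(2) by blast
    then have "x \<in> U" using x(1) by blast
    then have "x \<in> vs1.span K" using x(2) K(3) by blast
    then show "x = 0" using disj x(1) by blast
  qed
  have imgspan: "f ` U \<subseteq> vs2.span (f ` (B - K))"
  proof -
    have "f ` U \<subseteq> vs2.span (f ` B)" using lf.spans_image[OF B(4)] .
    moreover have "f ` B \<subseteq> insert 0 (f ` (B-K))" using fK0 by auto
    then have "vs2.span (f ` B) \<subseteq> vs2.span (f ` (B-K))"
      by (metis vs2.span_mono vs2.span_insert_0)
    ultimately show ?thesis by blast
  qed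
  have "vs2.dim (f ` U) = card (f ` (B-K))"
    apply (rule vs2.basis_card_eq_dim[symmetric])
    using B(2) imgspan lf.independent_injective_image[OF vs1.independent_mono[OF B(3)] inj] by auto
  also have "\<dots> = card (B-K)" using card_image inj_on_subset[OF inj vs1.span_superset] by blast
  also have "\<dots> = card B - card K" using card_Diff_subset finK B(1) by blast
  finally show ?thesis using dU dN card_mono[OF finB B(1)] by simp
qed

end

definition dlt :: "'a \<Rightarrow> 'a \<Rightarrow> complex" where "dlt a = (\<lambda>x. if x = a then 1 else 0)"

lemma supp_sum_dlt:
  assumes "finite X" "\<forall>x. x \<notin> X \<longrightarrow> g x = 0"
  shows "(\<Sum>x\<in>X. vsc (g x) (dlt x)) = g"
proof
  fix y
  have "(\<Sum>x\<in>X. vsc (g x) (dlt x)) y = (\<Sum>x\<in>X. (if x = y then g y else 0))"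
    by (simp add: sum_fun_app vsc_def dlt_def) (rule sum.cong, auto)
  also have "\<dots> = g y" using assms by (simp add: sum.delta)
  finally show "(\<Sum>x\<in>X. vsc (g x) (dlt x)) y = g y" .
qed

lemma supp_in_span:
  assumes fin: "finite X" and g: "\<forall>x. x \<notin> X \<longrightarrow> (g :: 'a \<Rightarrow> complex) x = 0"
  shows "g \<in> module.span vsc (dlt ` X)"
proof -
  interpret vector_space "vsc :: complex \<Rightarrow> ('a \<Rightarrow> complex) \<Rightarrow> _" by (rule vs_vsc)
  have "g = (\<Sum>x\<in>X. vsc (g x) (dlt x))" using supp_sum_dlt[OF fin g] by simp
  also have "\<dots> \<in> span (dlt ` X)"
    by (intro span_sum span_scale span_base) auto
  finally show ?thesis .
qed

lemma dim_supp:
  assumes fin: "finite X"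
  shows "vector_space.dim vsc {g :: 'a \<Rightarrow> complex. \<forall>x. x \<notin> X \<longrightarrow> g x = 0} = card X"
proof -
  interpret vector_space "vsc :: complex \<Rightarrow> ('a \<Rightarrow> complex) \<Rightarrow> _" by (rule vs_vsc)
  have injd: "inj dlt" by (auto simp: inj_def dlt_def fun_eq_iff split: if_splits)
  have ind: "independent (dlt ` X)"
  proof (rule independent_if_scalars_zero)
    show "finite (dlt ` X)" using fin by simp
    fix c d assume s: "(\<Sum>x\<in>dlt ` X. vsc (c x) x) = 0" and d: "d \<in> dlt ` X"
    then obtain a where a: "a \<in> X" "d = dlt a" by auto
    have "(\<Sum>x\<in>dlt ` X. vsc (c x) x) = (\<Sum>x\<in>X. vsc (c (dlt x)) (dlt x))"
      by (rule sum.reindex_cong[where l=dlt]) (auto intro: inj_on_subset[OF injd])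
    also have "\<dots> = (\<Sum>x\<in>X. vsc ((\<lambda>y. if y \<in> X then c (dlt y) else 0) x) (dlt x))"
      by (rule sum.cong) auto
    also have "\<dots> = (\<lambda>y. if y \<in> X then c (dlt y) else 0)"
      by (rule supp_sum_dlt[OF fin]) auto
    finally have "(\<lambda>y. if y \<in> X then c (dlt y) else 0) = 0" using s by simp
    then have "(\<lambda>y. if y \<in> X then c (dlt y) else 0) a = (0::'a\<Rightarrow>complex) a" by (rule fun_cong)
    then show "c d = 0" using a by simp
  qed
  show ?thesis
  proof (rule dim_unique[OF _ _ ind])
    show "dlt ` X \<subseteq> {g. \<forall>x. x \<notin> X \<longrightarrow> g x = 0}" by (auto simp: dlt_def)
    show "{g. \<forall>x. x \<notin> X \<longrightarrow> g x = 0} \<subseteq> span (dlt ` X)"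
    proof
      fix g :: "'a \<Rightarrow> complex" assume "g \<in> {g. \<forall>x. x \<notin> X \<longrightarrow> g x = 0}"
      then have "g = (\<Sum>x\<in>X. vsc (g x) (dlt x))" using supp_sum_dlt[OF fin] by auto
      also have "\<dots> \<in> span (dlt ` X)"
        by (intro span_sum span_scale span_base) auto
      finally show "g \<in> span (dlt ` X)" .
    qed
    show "card (dlt ` X) = card X" by (rule card_image[OF inj_on_subset[OF injd subset_UNIV]])
  qed
qed



lemma dcos: "((\<lambda>y. complex_of_real (cos (k*y))) has_vector_derivative complex_of_real (- (k * sin (k*y)))) (at y within S)"
  by (rule has_vector_derivative_of_real) (auto intro!: derivative_eq_intros)

lemma dsin: "((\<lambda>y. complex_of_real (sin (k*y))) has_vector_derivative complex_of_real (k * cos (k*y))) (at y within S)"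
  by (rule has_vector_derivative_of_real) (auto intro!: derivative_eq_intros)

lemma edge_ode:
  fixes u u' u'' :: "real \<Rightarrow> complex" and k :: real
  assumes k: "k > 0" and H: "edge_H2 u u' u''"
    and ae: "AE x in lborel. x \<in> {0..1} \<longrightarrow> - u'' x = complex_of_real (k^2) * u x"
  shows "\<forall>x\<in>{0..1}. u x = u 0 * complex_of_real (cos (k*x)) + (u' 0 / complex_of_real k) * complex_of_real (sin (k*x))
            \<and> u' x = - (complex_of_real k * u 0) * complex_of_real (sin (k*x)) + u' 0 * complex_of_real (cos (k*x))"
proof -
  let ?I = "{0..1::real}"
  let ?C = "\<lambda>y. complex_of_real (cos (k*y))"
  let ?S = "\<lambda>y. complex_of_real (sin (k*y))"
  let ?K = "complex_of_real k"
  have d1: "\<And>x. x \<in> ?I \<Longrightarrow> (u has_vector_derivative u' x) (at x within ?I)"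
    and cu': "continuous_on ?I u'"
    and hint: "\<And>x. x \<in> ?I \<Longrightarrow> (u'' has_integral (u' x - u' 0)) {0..x}"
    using H unfolding edge_H2_def by auto
  have cu: "continuous_on ?I u" using continuous_on_vector_derivative[OF d1] by blast
  define g where "g t = - complex_of_real (k^2) * u t" for t
  have cg: "continuous_on ?I g" unfolding g_def by (intro continuous_intros cu)
  obtain N where N: "negligible N" "{x. \<not> (x \<in> ?I \<longrightarrow> - u'' x = complex_of_real (k^2) * u x)} \<subseteq> N"
    using AE_completion[OF ae] unfolding eventually_ae_filter_negligible by blast
  have int2: "(g has_integral (u' x - u' 0)) {0..x}" if x: "x \<in> ?I" for x
  proof (rule has_integral_spike[OF N(1) _ hint[OF x]])
    fix t assume t: "t \<in> {0..x} - N"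
    then have "t \<in> ?I" using x by auto
    moreover have "t \<notin> N" using t by blast
    ultimately have "- u'' t = complex_of_real (k^2) * u t" using N(2) by blast
    then show "g t = u'' t" unfolding g_def by (metis minus_minus mult_minus_left)
  qed
  have d2: "(u' has_vector_derivative g x) (at x within ?I)" if x: "x \<in> ?I" for x
  proof -
    have "((\<lambda>y. integral {0..y} g) has_vector_derivative g x) (at x within ?I)"
      by (rule integral_has_vector_derivative[OF cg x])
    then have "((\<lambda>y. u' 0 + integral {0..y} g) has_vector_derivative g x) (at x within ?I)"
      by (metis has_vector_derivative_add[OF has_vector_derivative_const[of "u' 0"]] add_0)
    moreover have "\<And>y. y \<in> ?I \<Longrightarrow> u' y = u' 0 + integral {0..y} g"
      using integral_unique[OF int2] by simp
    ultimately show ?thesis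
      using has_vector_derivative_transform[OF x, of u' "\<lambda>y. u' 0 + integral {0..y} g" "g x"] by blast
  qed
  define w1 where "w1 y = ?K * u y * ?C y - u' y * ?S y" for y
  define w2 where "w2 y = ?K * u y * ?S y + u' y * ?C y" for y
  have dw1: "(w1 has_vector_derivative 0) (at y within ?I)" if y: "y \<in> ?I" for y
  proof -
    have A: "((\<lambda>y. ?K * u y * ?C y) has_vector_derivative
       (?K * u y * complex_of_real (- (k * sin (k*y))) + ?K * u' y * ?C y)) (at y within ?I)"
      by (rule has_vector_derivative_mult[OF has_vector_derivative_mult_right[OF d1[OF y]] dcos])
    have B: "((\<lambda>y. u' y * ?S y) has_vector_derivative
       (u' y * complex_of_real (k * cos (k*y)) + g y * ?S y)) (at y within ?I)"
      by (rule has_vector_derivative_mult[OF d2[OF y] dsin])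
    have eq: "(?K * u y * complex_of_real (- (k * sin (k*y))) + ?K * u' y * ?C y)
       - (u' y * complex_of_real (k * cos (k*y)) + g y * ?S y) = 0"
      unfolding g_def by (simp add: algebra_simps power2_eq_square)
    show ?thesis using has_vector_derivative_diff[OF A B] unfolding eq w1_def .
  qed
  have dw2: "(w2 has_vector_derivative 0) (at y within ?I)" if y: "y \<in> ?I" for y
  proof -
    have A: "((\<lambda>y. ?K * u y * ?S y) has_vector_derivative
       (?K * u y * complex_of_real (k * cos (k*y)) + ?K * u' y * ?S y)) (at y within ?I)"
      by (rule has_vector_derivative_mult[OF has_vector_derivative_mult_right[OF d1[OF y]] dsin])
    have B: "((\<lambda>y. u' y * ?C y) has_vector_derivative
       (u' y * complex_of_real (- (k * sin (k*y))) + g y * ?C y)) (at y within ?I)"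
      by (rule has_vector_derivative_mult[OF d2[OF y] dcos])
    have eq: "(?K * u y * complex_of_real (k * cos (k*y)) + ?K * u' y * ?S y)
       + (u' y * complex_of_real (- (k * sin (k*y))) + g y * ?C y) = 0"
      unfolding g_def by (simp add: algebra_simps power2_eq_square)
    show ?thesis using has_vector_derivative_add[OF A B] unfolding eq w2_def .
  qed
  have cvx: "convex ?I" by (simp add: convex_real_interval)
  obtain c1 where c1: "\<And>x. x \<in> ?I \<Longrightarrow> w1 x = c1"
    using has_vector_derivative_zero_constant[OF cvx dw1] by blast
  obtain c2 where c2: "\<And>x. x \<in> ?I \<Longrightarrow> w2 x = c2"
    using has_vector_derivative_zero_constant[OF cvx dw2] by blast
  have w10: "c1 = ?K * u 0" using c1[of 0] by (simp add: w1_def)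
  have w20: "c2 = u' 0" using c2[of 0] by (simp add: w2_def)
  show ?thesis
  proof
    fix x assume x: "x \<in> ?I"
    have cs: "?C x * ?C x + ?S x * ?S x = 1"
      by (metis of_real_add of_real_mult of_real_1 sin_cos_squared_add3 add.commute)
    have e1: "?K * u x = w1 x * ?C x + w2 x * ?S x"
    proof -
      have "w1 x * ?C x + w2 x * ?S x = ?K * u x * (?C x * ?C x + ?S x * ?S x)"
        unfolding w1_def w2_def by (simp add: algebra_simps)
      then show ?thesis using cs by simp
    qed
    have e2: "u' x = w2 x * ?C x - w1 x * ?S x"
    proof -
      have "w2 x * ?C x - w1 x * ?S x = u' x * (?C x * ?C x + ?S x * ?S x)"
        unfolding w1_def w2_def by (simp add: algebra_simps)
      then show ?thesis using cs by simp
    qed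
    have Kn: "?K \<noteq> 0" using k by simp
    show "u x = u 0 * ?C x + (u' 0 / ?K) * ?S x \<and> u' x = - (?K * u 0) * ?S x + u' 0 * ?C x"
    proof
      show "u x = u 0 * ?C x + (u' 0 / ?K) * ?S x"
        using e1 c1[OF x] c2[OF x] w10 w20 Kn by (simp add: field_simps)
      show "u' x = - (?K * u 0) * ?S x + u' 0 * ?C x"
        using e2 c1[OF x] c2[OF x] w10 w20 by (simp add: algebra_simps)
    qed
  qed
qed



lemma hvd_eq: "(f has_vector_derivative D) F \<Longrightarrow> D = E \<Longrightarrow> (f has_vector_derivative E) F"
  by simp

lemma edge_sol:
  fixes A B :: complex and k :: real
  defines "v \<equiv> \<lambda>x. A * complex_of_real (cos (k*x)) + B * complex_of_real (sin (k*x))"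
  defines "v' \<equiv> \<lambda>x. - (complex_of_real k * A) * complex_of_real (sin (k*x)) + complex_of_real k * B * complex_of_real (cos (k*x))"
  assumes u: "\<And>x. x \<in> {0..1} \<Longrightarrow> u x = v x"
  shows "edge_H2 u v' (\<lambda>x. - complex_of_real (k^2) * v x)"
proof -
  let ?I = "{0..1::real}"
  have dv: "(v has_vector_derivative v' x) (at x within S)" for x S
  proof (rule hvd_eq)
    show "(v has_vector_derivative (A * complex_of_real (- (k * sin (k*x))) + B * complex_of_real (k * cos (k*x)))) (at x within S)"
      unfolding v_def by (intro has_vector_derivative_add has_vector_derivative_mult_right dcos dsin)
    show "A * complex_of_real (- (k * sin (k*x))) + B * complex_of_real (k * cos (k*x)) = v' x"
      unfolding v'_def by (simp add: algebra_simps)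
  qed
  have dv': "(v' has_vector_derivative (- complex_of_real (k^2) * v x)) (at x within S)" for x S
  proof (rule hvd_eq)
    show "(v' has_vector_derivative (- (complex_of_real k * A) * complex_of_real (k * cos (k*x)) + complex_of_real k * B * complex_of_real (- (k * sin (k*x))))) (at x within S)"
      unfolding v'_def by (intro has_vector_derivative_add has_vector_derivative_mult_right dcos dsin)
    show "- (complex_of_real k * A) * complex_of_real (k * cos (k*x)) + complex_of_real k * B * complex_of_real (- (k * sin (k*x))) = - complex_of_real (k^2) * v x"
      unfolding v_def by (simp add: algebra_simps power2_eq_square)
  qed
  have cv: "continuous_on S v" for S using continuous_on_vector_derivative[OF dv] by blast
  have cv': "continuous_on S v'" for S using continuous_on_vector_derivative[OF dv'] by blast
  have cv'': "continuous_on S (\<lambda>x. - complex_of_real (k^2) * v x)" for S by (intro continuous_intros cv)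
  show ?thesis unfolding edge_H2_def
  proof (intro conjI ballI)
    fix x assume x: "x \<in> ?I"
    show "(u has_vector_derivative v' x) (at x within ?I)"
      using has_vector_derivative_transform[OF x, of u v "v' x"] u dv by blast
    show "((\<lambda>x. - complex_of_real (k^2) * v x) has_integral (v' x - v' 0)) {0..x}"
      using fundamental_theorem_of_calculus[of 0 x v' "\<lambda>x. - complex_of_real (k^2) * v x"] x dv' by auto
  next
    show "continuous_on ?I v'" by (rule cv')
    show "(\<lambda>x. - complex_of_real (k^2) * v x) absolutely_integrable_on ?I"
      by (rule absolutely_integrable_continuous_real[OF cv''])
    show "(\<lambda>x. (norm (- complex_of_real (k^2) * v x))\<^sup>2) integrable_on ?I"
      by (rule integrable_continuous_real) (intro continuous_intros cv)
  qed
qed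



theorem theorem2p3:
  fixes V :: "'v set" and E :: "('v \<times> 'v) set" and n :: nat
  assumes "simple_graph V E" and "graph_connected V E" and "graph_bipartite V E"
    and "E \<noteq> {}"
    and "n \<ge> 1"
  shows "int (vector_space.dim fscale (eigenspace_L V E (complex_of_real ((real n * pi)\<^sup>2))))
           = int (card E) - int (card V) + 2"
proof -
  from assms(1) have finV: "finite V" and EV: "E \<subseteq> V \<times> V" unfolding simple_graph_def by auto
  have finE: "finite E" using finite_subset[OF EV] finV by blast
  obtain Aset where Aset: "\<forall>(a,b)\<in>E. (a \<in> Aset \<longleftrightarrow> b \<notin> Aset)"
    using assms(3) unfolding graph_bipartite_def by blast
  obtain e0 where e0: "e0 \<in> E" using assms(4) by blast
  define v0 where "v0 = fst e0"
  have v0V: "v0 \<in> V" using e0 EV v0_def by auto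
  define k where "k = real n * pi"
  have kpos: "k > 0" using assms(5) by (simp add: k_def)
  define K where "K = complex_of_real k"
  have Kn0: "K \<noteq> 0" using kpos K_def by simp
  define s :: complex where "s = (-1)^n"
  have ss: "s * s = 1"
  proof -
    have "s * s = ((-1) * (-1))^n" by (simp add: s_def power_mult_distrib)
    then show ?thesis by simp
  qed
  have cosk: "complex_of_real (cos k) = s" by (simp add: k_def s_def cos_npi)
  have sink: "sin k = 0" by (simp add: k_def sin_npi)
  define chi :: "'v \<Rightarrow> complex" where "chi v = (if even n then 1 else if v \<in> Aset then 1 else -1)" for v
  have chi2: "chi v * chi v = 1" for v by (simp add: chi_def)
  have chin0: "chi v \<noteq> 0" for v by (simp add: chi_def)
  have chiE: "chi b = s * chi a" if "(a,b) \<in> E" for a b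
    using Aset that by (auto simp: chi_def s_def)
  define Phi :: "(('v\<times>'v) option \<Rightarrow> complex) \<Rightarrow> ('v\<times>'v \<Rightarrow> real \<Rightarrow> complex)" where
    "Phi p = (\<lambda>e x. if e \<in> E \<and> x \<in> {0..1} then p None * chi (fst e) * complex_of_real (cos (k*x))
        + p (Some e) * complex_of_real (sin (k*x)) else 0)" for p
  define X where "X = insert None (Some ` E)"
  define U where "U = {p :: ('v\<times>'v) option \<Rightarrow> complex. \<forall>x. x \<notin> X \<longrightarrow> p x = 0}"
  define Kir where "Kir p v = (\<Sum>e\<in>{e\<in>E. fst e = v}. p (Some e)) - s * (\<Sum>e\<in>{e\<in>E. snd e = v}. p (Some e))"
    for p :: "('v\<times>'v) option \<Rightarrow> complex" and v
  define Lm where "Lm p = (\<lambda>v. if v \<in> V then Kir p v else 0)" for p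
  define W where "W = {p \<in> U. Lm p = 0}"
  define psi where "psi g = (\<Sum>v\<in>V. chi v * g v)" for g :: "'v \<Rightarrow> complex"
  define U' where "U' = {g :: 'v \<Rightarrow> complex. \<forall>x. x \<notin> V \<longrightarrow> g x = 0}"
  define H where "H = {g \<in> U'. psi g = 0}"
  interpret VO: vector_space "vsc :: complex \<Rightarrow> (('v\<times>'v) option \<Rightarrow> complex) \<Rightarrow> _" by (rule vs_vsc)
  interpret VV: vector_space "vsc :: complex \<Rightarrow> ('v \<Rightarrow> complex) \<Rightarrow> _" by (rule vs_vsc)
  interpret VF: vector_space "fscale :: complex \<Rightarrow> ('v\<times>'v \<Rightarrow> real \<Rightarrow> complex) \<Rightarrow> _" by (rule vs_fscale)
  have linPhi: "Vector_Spaces.linear vsc fscale Phi"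
    unfolding Vector_Spaces.linear_iff
    by (auto simp: vs_vsc vs_fscale Phi_def vsc_def fscale_def fun_eq_iff algebra_simps)
  have linLm: "Vector_Spaces.linear vsc vsc Lm"
    unfolding Vector_Spaces.linear_iff
    by (auto simp: vs_vsc Lm_def Kir_def vsc_def fun_eq_iff algebra_simps sum.distrib sum_distrib_left)
  have linpsi: "Vector_Spaces.linear vsc (*) psi"
    unfolding Vector_Spaces.linear_iff
    by (auto simp: vs_vsc vs_mult psi_def vsc_def algebra_simps sum.distrib sum_distrib_left)
  interpret lPhi: Vector_Spaces.linear vsc fscale Phi by (rule linPhi)
  interpret lLm: Vector_Spaces.linear vsc vsc Lm by (rule linLm)
  interpret lpsi: Vector_Spaces.linear vsc "(*)" psi by (rule linpsi)
  have subU: "VO.subspace U" unfolding VO.subspace_def U_def by (auto simp: vsc_def)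
  have subU': "VV.subspace U'" unfolding VV.subspace_def U'_def by (auto simp: vsc_def)
  have subW: "VO.subspace W" 
    unfolding VO.subspace_def W_def using subU[unfolded VO.subspace_def]
    by (auto simp: lLm.add lLm.scale lLm.zero VV.scale_zero_right)
  have finX: "finite X" using finE by (simp add: X_def)
  have cardX: "card X = card E + 1"
  proof -
    have "card (Some ` E) = card E" by (rule card_image) simp
    moreover have "None \<notin> Some ` E" by auto
    ultimately show ?thesis using finE by (simp add: X_def)
  qed
  have lam: "complex_of_real ((real n * pi)\<^sup>2) = complex_of_real (k^2)" by (simp add: k_def)
  have eig: "eigenspace_L V E (complex_of_real ((real n * pi)\<^sup>2)) = Phi ` W"
  proof
    show "Phi ` W \<subseteq> eigenspace_L V E (complex_of_real ((real n * pi)\<^sup>2))"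
    proof
      fix f assume "f \<in> Phi ` W"
      then obtain p where pW: "p \<in> W" and f: "f = Phi p" by blast
      have Kir0: "Kir p v = 0" if "v \<in> V" for v
        using pW that fun_cong[of "Lm p" 0 v] unfolding W_def Lm_def by auto
      define A where "A e = p None * chi (fst e)" for e :: "'v\<times>'v"
      define f' where "f' e = (\<lambda>x. - (complex_of_real k * A e) * complex_of_real (sin (k*x))
          + complex_of_real k * p (Some e) * complex_of_real (cos (k*x)))" for e
      define f'' where "f'' e = (\<lambda>x. - complex_of_real (k^2) * (A e * complex_of_real (cos (k*x))
          + p (Some e) * complex_of_real (sin (k*x))))" for e
      have c1: "\<forall>e\<in>E. edge_H2 (f e) (f' e) (f'' e)"
      proof
        fix e assume e: "e \<in> E"
        show "edge_H2 (f e) (f' e) (f'' e)"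
          unfolding f'_def f''_def by (rule edge_sol) (simp add: f Phi_def A_def e)
      qed
      have c2: "\<forall>(a,b)\<in>E. f (a,b) 0 = p None * chi a \<and> f (a,b) 1 = p None * chi b"
      proof (clarify)
        fix a b assume ab: "(a,b) \<in> E"
        show "f (a,b) 0 = p None * chi a \<and> f (a,b) 1 = p None * chi b"
          using ab chiE[OF ab] cosk sink by (simp add: f Phi_def)
      qed
      have c3: "\<forall>v\<in>V. (\<Sum>e\<in>{e\<in>E. fst e = v}. f' e 0) - (\<Sum>e\<in>{e\<in>E. snd e = v}. f' e 1) = 0"
      proof
        fix v assume v: "v \<in> V"
        have o: "(\<Sum>e\<in>{e\<in>E. fst e = v}. f' e 0) = K * (\<Sum>e\<in>{e\<in>E. fst e = v}. p (Some e))"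
          by (simp add: f'_def K_def sum_distrib_left)
        have i: "(\<Sum>e\<in>{e\<in>E. snd e = v}. f' e 1) = K * (s * (\<Sum>e\<in>{e\<in>E. snd e = v}. p (Some e)))"
          using cosk sink by (simp add: f'_def K_def sum_distrib_left algebra_simps)
        show "(\<Sum>e\<in>{e\<in>E. fst e = v}. f' e 0) - (\<Sum>e\<in>{e\<in>E. snd e = v}. f' e 1) = 0"
          unfolding o i using Kir0[OF v] unfolding Kir_def by (simp add: right_diff_distrib[symmetric])
      qed
      have c4: "\<forall>e\<in>E. AE x in lborel. x \<in> {0..1} \<longrightarrow> - f'' e x = complex_of_real ((real n * pi)\<^sup>2) * f e x"
        unfolding lam by (intro ballI AE_I2 impI) (simp add: f Phi_def f''_def A_def)
      have "normalised_fun E f" unfolding normalised_fun_def f Phi_def by auto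
      moreover have "in_dom_L V E f f' f''"
        unfolding in_dom_L_def
        by (intro conjI c1 c3 exI[of _ "\<lambda>v. p None * chi v"] c2)
      ultimately show "f \<in> eigenspace_L V E (complex_of_real ((real n * pi)\<^sup>2))"
        unfolding eigenspace_L_def using c4 by blast
    qed
  next
    show "eigenspace_L V E (complex_of_real ((real n * pi)\<^sup>2)) \<subseteq> Phi ` W"
    proof
      fix f assume "f \<in> eigenspace_L V E (complex_of_real ((real n * pi)\<^sup>2))"
      then obtain f' f'' where norm: "normalised_fun E f" and dom: "in_dom_L V E f f' f''"
        and ae: "\<forall>e\<in>E. AE x in lborel. x \<in> {0..1} \<longrightarrow> - f'' e x = complex_of_real ((real n * pi)\<^sup>2) * f e x"
        unfolding eigenspace_L_def by blast
      from dom have H2: "\<forall>e\<in>E. edge_H2 (f e) (f' e) (f'' e)"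
        and kir: "\<forall>v\<in>V. (\<Sum>e\<in>{e\<in>E. fst e = v}. f' e 0) - (\<Sum>e\<in>{e\<in>E. snd e = v}. f' e 1) = 0"
        unfolding in_dom_L_def by blast+
      from dom obtain \<phi> where phi: "\<forall>(a,b)\<in>E. f (a,b) 0 = \<phi> a \<and> f (a,b) 1 = \<phi> b"
        unfolding in_dom_L_def by blast
      have sol: "\<forall>x\<in>{0..1}. f e x = f e 0 * complex_of_real (cos (k*x)) + (f' e 0 / K) * complex_of_real (sin (k*x))
            \<and> f' e x = - (K * f e 0) * complex_of_real (sin (k*x)) + f' e 0 * complex_of_real (cos (k*x))"
        if e: "e \<in> E" for e
      proof -
        have aeE: "AE x in lborel. x \<in> {0..1} \<longrightarrow> - f'' e x = complex_of_real (k^2) * f e x"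
          using ae e unfolding lam by simp
        show ?thesis using edge_ode[OF kpos H2[rule_format, OF e] aeE] unfolding K_def .
      qed
      have f1: "f e 1 = s * f e 0" and f'1: "f' e 1 = s * f' e 0" if e: "e \<in> E" for e
        using sol[OF e, rule_format, of 1] cosk sink by (auto simp: algebra_simps)
      have phiE: "\<phi> b = s * \<phi> a" if ab: "(a,b) \<in> E" for a b
        using phi ab f1[OF ab] by auto
      have phiV: "\<phi> w * chi w = \<phi> v0 * chi v0" if "(v0, w) \<in> (E \<union> E\<inverse>)\<^sup>*" for w
        using that
      proof (induction rule: rtrancl_induct)
        case base then show ?case by simp
      next
        case (step x w)
        from step(2) consider "(x,w) \<in> E" | "(w,x) \<in> E" by blast
        then have "\<phi> w * chi w = \<phi> x * chi x"
        proof cases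
          case 1
          have "\<phi> w * chi w = (s * s) * (\<phi> x * chi x)" using phiE[OF 1] chiE[OF 1] by (simp add: algebra_simps)
          then show ?thesis using ss by simp
        next
          case 2
          have "\<phi> x * chi x = (s * s) * (\<phi> w * chi w)" using phiE[OF 2] chiE[OF 2] by (simp add: algebra_simps)
          then show ?thesis using ss by simp
        qed
        then show ?case using step.IH by simp
      qed
      define c where "c = \<phi> v0 * chi v0"
      have phic: "\<phi> w = c * chi w" if w: "w \<in> V" for w
      proof -
        have "(v0, w) \<in> (E \<union> E\<inverse>)\<^sup>*" using assms(2) v0V w unfolding graph_connected_def by blast
        then have "\<phi> w * chi w = c" unfolding c_def by (rule phiV)
        then have "\<phi> w * chi w * chi w = c * chi w" by simp
        then show ?thesis using chi2[of w] by (simp add: mult.assoc)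
      qed
      define p where "p y = (case y of None \<Rightarrow> c | Some e \<Rightarrow> if e \<in> E then f' e 0 / K else 0)" for y
      have pU: "p \<in> U" by (auto simp: U_def X_def p_def split: option.splits)
      have pL: "Lm p = 0"
      proof
        fix v
        show "Lm p v = 0 v"
        proof (cases "v \<in> V")
          case False then show ?thesis by (simp add: Lm_def)
        next
          case True
          have o: "(\<Sum>e\<in>{e\<in>E. fst e = v}. p (Some e)) = (\<Sum>e\<in>{e\<in>E. fst e = v}. f' e 0) / K"
            unfolding sum_divide_distrib by (rule sum.cong) (auto simp: p_def)
          have i: "(\<Sum>e\<in>{e\<in>E. snd e = v}. p (Some e)) = (\<Sum>e\<in>{e\<in>E. snd e = v}. f' e 0) / K"
            unfolding sum_divide_distrib by (rule sum.cong) (auto simp: p_def)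
          have i1: "(\<Sum>e\<in>{e\<in>E. snd e = v}. f' e 1) = s * (\<Sum>e\<in>{e\<in>E. snd e = v}. f' e 0)"
            unfolding sum_distrib_left by (rule sum.cong) (auto simp: f'1)
          have "Kir p v = ((\<Sum>e\<in>{e\<in>E. fst e = v}. f' e 0) - (\<Sum>e\<in>{e\<in>E. snd e = v}. f' e 1)) / K"
            unfolding Kir_def o i i1 by (simp add: diff_divide_distrib)
          also have "\<dots> = 0" using kir True by simp
          finally show ?thesis using True by (simp add: Lm_def)
        qed
      qed
      have fP: "f = Phi p"
      proof (intro ext)
        fix e x
        show "f e x = Phi p e x"
        proof (cases "e \<in> E \<and> x \<in> {0..1}")
          case True
          then have e: "e \<in> E" and x: "x \<in> {0..1}" by auto
          obtain a b where ab: "e = (a,b)" by (cases e)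
          have aV: "a \<in> V" using e ab EV by auto
          have "f e 0 = c * chi (fst e)" using phi e ab phic[OF aV] by auto
          then show ?thesis using sol[OF e, rule_format, OF x] x e by (simp add: Phi_def p_def)
        next
          case False
          then have "f e x = 0" using norm unfolding normalised_fun_def by blast
          moreover have "Phi p e x = 0" using False unfolding Phi_def by (simp only: if_False)
          ultimately show ?thesis by simp
        qed
      qed
      show "f \<in> Phi ` W" using fP pU pL by (auto simp: W_def)
    qed
  qed
  have inj: "inj_on Phi W"
  proof (subst lPhi.inj_on_iff_eq_0[OF subW], intro ballI impI)
    fix p assume pW: "p \<in> W" and P0: "Phi p = 0"
    have pU: "\<forall>x. x \<notin> X \<longrightarrow> p x = 0" using pW by (simp add: W_def U_def)
    have "Phi p e0 0 = 0" using fun_cong[OF fun_cong[OF P0, of e0], of 0] by simp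
    then have "p None * chi (fst e0) = 0" using e0 by (simp add: Phi_def)
    then have pN: "p None = 0" using chin0 by simp
    have pS: "p (Some e) = 0" if e: "e \<in> E" for e
    proof -
      define x where "x = 1 / (2 * real n)"
      have x01: "x \<in> {0..1}" using assms(5) by (simp add: x_def field_simps)
      have kx: "k * x = pi / 2" using assms(5) by (simp add: x_def k_def field_simps)
      have "Phi p e x = 0" using fun_cong[OF fun_cong[OF P0, of e], of x] by simp
      moreover have "sin (k * x) = 1" unfolding kx by simp
      ultimately show ?thesis using e x01 pN by (simp add: Phi_def)
    qed
    show "p = 0"
    proof
      fix y show "p y = 0 y"
      proof (cases y)
        case None then show ?thesis using pN by simp
      next
        case (Some e)
        show ?thesis
        proof (cases "e \<in> E")
          case True then show ?thesis using pS Some by simp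
        next
          case False
          then have "Some e \<notin> X" by (auto simp: X_def)
          then show ?thesis using pU Some by simp
        qed
      qed
    qed
  qed
  have grp: "(\<Sum>v\<in>V. chi v * (\<Sum>e\<in>{e\<in>E. f e = v}. h e)) = (\<Sum>e\<in>E. chi (f e) * h e)"
    if "f ` E \<subseteq> V" for f :: "'v\<times>'v \<Rightarrow> 'v" and h :: "'v\<times>'v \<Rightarrow> complex"
  proof -
    have "(\<Sum>v\<in>V. chi v * (\<Sum>e\<in>{e\<in>E. f e = v}. h e)) = (\<Sum>v\<in>V. \<Sum>e\<in>{e\<in>E. f e = v}. chi (f e) * h e)"
      unfolding sum_distrib_left by (intro sum.cong refl) auto
    also have "\<dots> = (\<Sum>e\<in>E. chi (f e) * h e)" by (rule sum.group[OF finE finV that])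
    finally show ?thesis .
  qed
  have fstE: "fst ` E \<subseteq> V" and sndE: "snd ` E \<subseteq> V" using EV by auto
  have chiE': "chi (snd e) = s * chi (fst e)" if "e \<in> E" for e
    using chiE[of "fst e" "snd e"] that by simp
  have subLU: "VV.subspace (Lm ` U)" by (rule lLm.subspace_image[OF subU])
  have Lmd: "Lm (vsc c (dlt (Some a))) = (\<lambda>v. if v \<in> V then (if fst a = v then c else 0) - s * (if snd a = v then c else 0) else 0)"
    if a: "a \<in> E" for a c
  proof
    fix v
    have fin1: "finite {e\<in>E. fst e = v}" and fin2: "finite {e\<in>E. snd e = v}" using finE by auto
    have "(\<Sum>e\<in>{e\<in>E. fst e = v}. vsc c (dlt (Some a)) (Some e)) = (\<Sum>e\<in>{e\<in>E. fst e = v}. if e = a then c else 0)"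
      by (rule sum.cong) (auto simp: vsc_def dlt_def)
    also have "\<dots> = (if fst a = v then c else 0)" using fin1 a by (simp add: sum.delta)
    finally have s1: "(\<Sum>e\<in>{e\<in>E. fst e = v}. vsc c (dlt (Some a)) (Some e)) = (if fst a = v then c else 0)" .
    have "(\<Sum>e\<in>{e\<in>E. snd e = v}. vsc c (dlt (Some a)) (Some e)) = (\<Sum>e\<in>{e\<in>E. snd e = v}. if e = a then c else 0)"
      by (rule sum.cong) (auto simp: vsc_def dlt_def)
    also have "\<dots> = (if snd a = v then c else 0)" using fin2 a by (simp add: sum.delta)
    finally have s2: "(\<Sum>e\<in>{e\<in>E. snd e = v}. vsc c (dlt (Some a)) (Some e)) = (if snd a = v then c else 0)" .
    show "Lm (vsc c (dlt (Some a))) v = (if v \<in> V then (if fst a = v then c else 0) - s * (if snd a = v then c else 0) else 0)"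
      unfolding Lm_def Kir_def s1 s2 by simp
  qed
  have dU: "vsc c (dlt (Some a)) \<in> U" if "a \<in> E" for a c
    using that by (auto simp: U_def X_def vsc_def dlt_def)
  have edge: "vsc (chi x) (dlt x) - vsc (chi w) (dlt w) \<in> Lm ` U" if xw: "(x,w) \<in> E \<union> E\<inverse>" for x w
  proof -
    from xw consider "(x,w) \<in> E" | "(w,x) \<in> E" by blast
    then show ?thesis
    proof cases
      case 1
      have xV: "x \<in> V" "w \<in> V" using 1 EV by auto
      have "Lm (vsc (chi x) (dlt (Some (x,w)))) = vsc (chi x) (dlt x) - vsc (chi w) (dlt w)"
      proof
        fix v
        show "Lm (vsc (chi x) (dlt (Some (x,w)))) v = (vsc (chi x) (dlt x) - vsc (chi w) (dlt w)) v"
          unfolding Lmd[OF 1] using xV chiE[OF 1]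
          by (cases "v = x"; cases "v = w") (auto simp: vsc_def dlt_def)
      qed
      then show ?thesis by (rule image_eqI[OF sym dU[OF 1]])
    next
      case 2
      have xV: "x \<in> V" "w \<in> V" using 2 EV by auto
      have "Lm (vsc (- chi w) (dlt (Some (w,x)))) = vsc (chi x) (dlt x) - vsc (chi w) (dlt w)"
      proof
        fix v
        show "Lm (vsc (- chi w) (dlt (Some (w,x)))) v = (vsc (chi x) (dlt x) - vsc (chi w) (dlt w)) v"
          unfolding Lmd[OF 2] using xV chiE[OF 2]
          by (cases "v = x"; cases "v = w") (auto simp: vsc_def dlt_def)
      qed
      then show ?thesis by (rule image_eqI[OF sym dU[OF 2]])
    qed
  qed
  have gen: "vsc (chi w) (dlt w) - vsc (chi v0) (dlt v0) \<in> Lm ` U" if "(v0, w) \<in> (E \<union> E\<inverse>)\<^sup>*" for w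
    using that
  proof (induction rule: rtrancl_induct)
    case base
    have "0 \<in> Lm ` U" using VV.subspace_0[OF subLU] .
    then show ?case by (simp only: diff_self)
  next
    case (step x w)
    have "vsc (chi w) (dlt w) - vsc (chi v0) (dlt v0)
       = (vsc (chi x) (dlt x) - vsc (chi v0) (dlt v0)) - (vsc (chi x) (dlt x) - vsc (chi w) (dlt w))"
      by (simp add: algebra_simps)
    also have "\<dots> \<in> Lm ` U" by (rule VV.subspace_diff[OF subLU step.IH edge[OF step.hyps(2)]])
    finally show ?case .
  qed
  have img: "Lm ` U = H"
  proof
    show "Lm ` U \<subseteq> H"
    proof
      fix g assume "g \<in> Lm ` U"
      then obtain p where p: "p \<in> U" "g = Lm p" by blast
      have "psi g = (\<Sum>v\<in>V. chi v * Kir p v)" unfolding psi_def p(2) Lm_def by (rule sum.cong) auto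
      also have "\<dots> = (\<Sum>v\<in>V. chi v * (\<Sum>e\<in>{e\<in>E. fst e = v}. p (Some e)))
          - s * (\<Sum>v\<in>V. chi v * (\<Sum>e\<in>{e\<in>E. snd e = v}. p (Some e)))"
        unfolding Kir_def by (simp add: right_diff_distrib sum_subtractf sum_distrib_left mult.left_commute)
      also have "\<dots> = (\<Sum>e\<in>E. chi (fst e) * p (Some e)) - s * (\<Sum>e\<in>E. chi (snd e) * p (Some e))"
        unfolding grp[OF fstE] grp[OF sndE] ..
      also have "s * (\<Sum>e\<in>E. chi (snd e) * p (Some e)) = (\<Sum>e\<in>E. chi (fst e) * p (Some e))"
        unfolding sum_distrib_left
      proof (rule sum.cong[OF refl])
        fix e assume "e \<in> E"
        then show "s * (chi (snd e) * p (Some e)) = chi (fst e) * p (Some e)"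
          using chiE'[of e] ss by (simp add: mult.assoc[symmetric])
      qed
      finally have "psi g = 0" by simp
      moreover have "g \<in> U'" using p by (auto simp: U'_def Lm_def)
      ultimately show "g \<in> H" by (simp add: H_def)
    qed
  next
    show "H \<subseteq> Lm ` U"
    proof
      fix g assume gH: "g \<in> H"
      then have gU: "\<And>x. x \<notin> V \<Longrightarrow> g x = 0" and gpsi: "psi g = 0" by (auto simp: H_def U'_def)
      have chi2': "chi u * (chi u * z) = z" for u z by (simp add: mult.assoc[symmetric] chi2)
      have "g = (\<Sum>u\<in>V. vsc (g u * chi u) (vsc (chi u) (dlt u) - vsc (chi v0) (dlt v0)))"
      proof
        fix y
        have "(\<Sum>u\<in>V. vsc (g u * chi u) (vsc (chi u) (dlt u) - vsc (chi v0) (dlt v0))) y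
           = (\<Sum>u\<in>V. (if u = y then g u else 0) - (if y = v0 then chi v0 * (chi u * g u) else 0))"
          unfolding sum_fun_app by (rule sum.cong) (auto simp: vsc_def dlt_def algebra_simps chi2 chi2')
        also have "\<dots> = (if y \<in> V then g y else 0) - (if y = v0 then chi v0 * psi g else 0)"
          using finV by (simp add: sum_subtractf sum.delta' psi_def sum_distrib_left)
        also have "\<dots> = g y" using gU gpsi by auto
        finally show "g y = (\<Sum>u\<in>V. vsc (g u * chi u) (vsc (chi u) (dlt u) - vsc (chi v0) (dlt v0))) y" by simp
      qed
      also have "\<dots> \<in> Lm ` U"
      proof (rule VV.subspace_sum[OF subLU])
        fix u assume "u \<in> V"
        then have "(v0, u) \<in> (E \<union> E\<inverse>)\<^sup>*" using assms(2) v0V unfolding graph_connected_def by blast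
        then show "vsc (g u * chi u) (vsc (chi u) (dlt u) - vsc (chi v0) (dlt v0)) \<in> Lm ` U"
          by (intro VV.subspace_scale[OF subLU] gen)
      qed
      finally show "g \<in> Lm ` U" .
    qed
  qed
  interpret P1: vector_space_pair "vsc :: complex \<Rightarrow> (('v\<times>'v) option \<Rightarrow> complex) \<Rightarrow> _"
     "fscale :: complex \<Rightarrow> ('v\<times>'v \<Rightarrow> real \<Rightarrow> complex) \<Rightarrow> _"
    by (simp add: vector_space_pair_def vs_vsc vs_fscale)
  interpret P2: vector_space_pair "vsc :: complex \<Rightarrow> (('v\<times>'v) option \<Rightarrow> complex) \<Rightarrow> _"
     "vsc :: complex \<Rightarrow> ('v \<Rightarrow> complex) \<Rightarrow> _"
    by (simp add: vector_space_pair_def vs_vsc)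
  interpret P3: vector_space_pair "vsc :: complex \<Rightarrow> ('v \<Rightarrow> complex) \<Rightarrow> _"
     "(*) :: complex \<Rightarrow> complex \<Rightarrow> complex"
    by (simp add: vector_space_pair_def vs_vsc vs_mult)
  have d1: "VF.dim (Phi ` W) = VO.dim W"
    by (rule P1.dim_image_eq_gen[OF linPhi]) (metis VO.span_eq_iff subW inj)
  have d2: "VO.dim U = VO.dim {x\<in>U. Lm x = 0} + VV.dim (Lm ` U)"
  proof (rule P2.rank_nullity_sub[OF linLm subU])
    show "finite (dlt ` X)" using finX by simp
    show "U \<subseteq> VO.span (dlt ` X)" unfolding U_def using supp_in_span[OF finX] by blast
  qed
  have d3: "VV.dim U' = VV.dim {x\<in>U'. psi x = 0} + vector_space.dim (*) (psi ` U')"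
  proof (rule P3.rank_nullity_sub[OF linpsi subU'])
    show "finite (dlt ` V)" using finV by simp
    show "U' \<subseteq> VV.span (dlt ` V)" unfolding U'_def using supp_in_span[OF finV] by blast
  qed
  have dU: "VO.dim U = card E + 1" unfolding U_def using dim_supp[OF finX] cardX by simp
  have dU': "VV.dim U' = card V" unfolding U'_def using dim_supp[OF finV] by simp
  have psiU: "psi ` U' = UNIV"
  proof -
    have "c \<in> psi ` U'" for c
    proof
      show "vsc (c * chi v0) (dlt v0) \<in> U'" using v0V by (auto simp: U'_def vsc_def dlt_def)
      have "psi (vsc (c * chi v0) (dlt v0)) = (\<Sum>v\<in>V. if v = v0 then c * (chi v0 * chi v0) else 0)"
        unfolding psi_def vsc_def dlt_def by (rule sum.cong) auto
      also have "\<dots> = c" using v0V finV chi2 by simp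
      finally show "c = psi (vsc (c * chi v0) (dlt v0))" by simp
    qed
    then show ?thesis by blast
  qed
  have dC: "vector_space.dim (*) (UNIV :: complex set) = 1"
  proof -
    have "vector_space_over_itself.span {1::complex} = UNIV"
      using vector_space_over_itself.span_scale[OF vector_space_over_itself.span_base[of 1 "{1}"]] by auto
    then have "vector_space.dim (*) (UNIV :: complex set) = vector_space_over_itself.dim {1::complex}"
      by (metis vector_space_over_itself.dim_span)
    then show ?thesis by simp
  qed
  have "card E + 1 = VO.dim W + (card V - 1)"
    using d2 d3 dU dU' psiU dC img unfolding W_def H_def by simp
  moreover have "card V \<ge> 1" using v0V finV by (metis One_nat_def Suc_leI card_gt_0_iff empty_iff)
  ultimately show ?thesis using eig d1 by simp
qed
end
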